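(* For every integer $n\ge1$ and real $x$, $$\frac{\mathfrak{C}_n(x)}{n!}=\det\begin{pmatrix} R(1)&1&&&\\ R(2)&R(1)&1&&\\ \vdots&\vdots&\ddots&\ddots&\\ R(n-1)&R(n-2)&\cdots&R(1)&1\\ R(n)&R(n-1)&\cdots&R(2)&R(1) \end{pmatrix},$$ the $n\times n$ lower Hessenberg matrix with entries $R(i-j+1)$ for $i\ge j$, $1$ on the superdiagonal and $0$ elsewhere, where $$R(j)=x\,\frac{(-1)^{j-1}}{j!}\left(\left(\tfrac12\right)^j-\left(-\tfrac12\right)^j\right).$$
   Context: For $n\ge1$ the central factorial is $x^{[n]}=x\,(x+\tfrac n2-1)(x+\tfrac n2-2)\cdots(x-\tfrac n2+1)$ (a product of $n$ factors), and $x^{[0]}=1$. The central factorial numbers of the second kind $T(n,k)$ ($0\le k\le n$) are defined by $x^n=\sum_{k=0}^n T(n,k)\,x^{[k]}$; equivalently $T(n,k)=\frac1{k!}\sum_{j=0}^k(-1)^j\binom kj\left(\frac k2-j\right)^n$, and $T(n,k)=0$ for $k>n$. The $n$th central Fubini-like polynomial is $\mathfrak{C}_n(x)=\sum_{k=0}^n k!\,T(n,k)\,x^k$. *)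

theory Defs
  imports Complex_Main "Jordan_Normal_Form.Determinant"
begin

(* central factorial numbers of the second kind, explicit formula; 0 for k > n *)
definition central_T :: "nat \<Rightarrow> nat \<Rightarrow> real" where
  "central_T n k = (if k > n then 0 else
     (1 / fact k) * (\<Sum>j=0..k. (-1)^j * real (k choose j) * (real k / 2 - real j)^n))"

definition central_fubini :: "nat \<Rightarrow> real \<Rightarrow> real" where
  "central_fubini n x = (\<Sum>k=0..n. fact k * central_T n k * x^k)"

definition R_coef :: "real \<Rightarrow> nat \<Rightarrow> real" where
  "R_coef x j = x * ((-1)^(j-1) / fact j) * ((1/2)^j - (-1/2)^j)"

(* n x n lower Hessenberg matrix, 0-based indices: entry (i,j) = R(i-j+1) for i >= j,
   1 on the superdiagonal (j = i+1), 0 elsewhere *)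
definition hess_mat :: "real \<Rightarrow> nat \<Rightarrow> real mat" where
  "hess_mat x n = mat n n (\<lambda>(i,j). if j \<le> i then R_coef x (i - j + 1)
                                   else if j = i + 1 then 1 else 0)"

end

theory Submission imports Defs "HOL-Computational_Algebra.Formal_Power_Series" begin

definition Gm :: "(nat \<Rightarrow> real) \<Rightarrow> (nat \<Rightarrow> real) \<Rightarrow> nat \<Rightarrow> real mat" where
 "Gm a c n = mat n n (\<lambda>(i,j). if j = 0 then c i else if j \<le> i then a (i-j+1) else if j = i+1 then 1 else 0)"

lemma Gm_carrier: "Gm a c n \<in> carrier_mat n n" by (simp add: Gm_def)

lemma del00: "mat_delete (Gm a c (Suc m)) 0 0 = Gm a (\<lambda>i. a (i+1)) m"
  by (rule eq_matI) (auto simp: mat_delete_def Gm_def)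

lemma del01: "mat_delete (Gm a c (Suc m)) 0 1 = Gm a (\<lambda>i. c (i+1)) m"
  by (rule eq_matI) (auto simp: mat_delete_def Gm_def)

lemma det_Gm1: "det (Gm a c (Suc 0)) = c 0"
proof -
  have z: "mat_delete (Gm a c (Suc 0)) 0 0 \<in> carrier_mat 0 0"
    using mat_delete_carrier[OF Gm_carrier, of a c "Suc 0" 0 0] by simp
  have "det (Gm a c (Suc 0)) = (\<Sum>j<Suc 0. Gm a c (Suc 0) $$ (0,j) * cofactor (Gm a c (Suc 0)) 0 j)"
    by (rule laplace_expansion_row[OF Gm_carrier]) simp
  also have "\<dots> = c 0"
    using det_dim_zero[OF z] by (simp add: cofactor_def Gm_def)
  finally show ?thesis .
qed

lemma det_Gm_step: "det (Gm a c (Suc (Suc m))) = c 0 * det (Gm a (\<lambda>i. a (i+1)) (Suc m)) - det (Gm a (\<lambda>i. c (i+1)) (Suc m))"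
proof -
  let ?A = "Gm a c (Suc (Suc m))"
  have "det ?A = (\<Sum>j<Suc (Suc m). ?A $$ (0,j) * cofactor ?A 0 j)"
    by (rule laplace_expansion_row[OF Gm_carrier]) simp
  also have "\<dots> = ?A $$ (0,0) * cofactor ?A 0 0 + ?A $$ (0,1) * cofactor ?A 0 1
      + (\<Sum>j<m. ?A $$ (0,Suc (Suc j)) * cofactor ?A 0 (Suc (Suc j)))"
    by (simp only: sum.lessThan_Suc_shift) simp
  also have "(\<Sum>j<m. ?A $$ (0,Suc (Suc j)) * cofactor ?A 0 (Suc (Suc j))) = 0"
    by (rule sum.neutral) (auto simp: Gm_def)
  moreover have "?A $$ (0,0) = c 0" "?A $$ (0,1) = 1" by (auto simp: Gm_def)
  ultimately show ?thesis
    by (simp add: cofactor_def del00 del01 del: One_nat_def)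
qed

lemma det_Gm: "det (Gm a c (Suc m)) = (\<Sum>k\<le>m. (-1)^k * c k * det (Gm a (\<lambda>i. a (i+1)) (m-k)))"
proof (induction m arbitrary: c)
  case 0
  have "det (Gm a (\<lambda>i. a (i+1)) 0) = 1" by (simp add: Gm_def)
  then show ?case by (simp add: det_Gm1)
next
  case (Suc m)
  have "det (Gm a c (Suc (Suc m))) = c 0 * det (Gm a (\<lambda>i. a (i+1)) (Suc m)) - det (Gm a (\<lambda>i. c (i+1)) (Suc m))"
    by (rule det_Gm_step)
  also have "det (Gm a (\<lambda>i. c (i+1)) (Suc m)) = (\<Sum>k\<le>m. (-1)^k * c (k+1) * det (Gm a (\<lambda>i. a (i+1)) (m-k)))"
    by (rule Suc.IH)
  finally show ?case
    by (simp only: sum.atMost_Suc_shift) (simp add: sum_negf[symmetric])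
qed

lemma hess_Gm: "hess_mat x n = Gm (R_coef x) (\<lambda>i. R_coef x (i+1)) n"
  by (rule eq_matI) (auto simp: hess_mat_def Gm_def)

lemma hess_rec: "det (hess_mat x (Suc m)) = (\<Sum>k\<le>m. (-1)^k * R_coef x (k+1) * det (hess_mat x (m-k)))"
  unfolding hess_Gm det_Gm ..

lemma hess0: "det (hess_mat x 0) = 1"
  by (simp add: hess_mat_def)

definition EE :: "real fps" where "EE = fps_exp (1/2) - fps_exp (-1/2)"

lemma EE0: "fps_nth EE 0 = 0" by (simp add: EE_def)

lemma EE_nth: "fps_nth EE k = ((1/2)^k - (-1/2)^k) / fact k" by (simp add: EE_def diff_divide_distrib)

lemma neg1_pow_fps: "(-1::real fps)^j = fps_const ((-1)^j)"
  by (induction j) simp_all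

lemma EE_term: "j \<le> k \<Longrightarrow> of_nat (k choose j) * (- fps_exp (-1/2)) ^ j * fps_exp (1/2) ^ (k - j)
   = fps_const ((-1)^j * real (k choose j)) * fps_exp (real k / 2 - real j)"
proof -
  assume jk: "j \<le> k"
  have e: "fps_exp (-1/2::real) ^ j * fps_exp (1/2) ^ (k - j) = fps_exp (real k / 2 - real j)"
    unfolding fps_exp_power_mult fps_exp_add_mult[symmetric]
    by (simp add: jk of_nat_diff field_simps)
  have m: "(- fps_exp (-1/2::real))^j = fps_const ((-1)^j) * fps_exp (-1/2)^j"
    by (subst power_minus) (simp only: neg1_pow_fps)
  have c: "(of_nat (k choose j) :: real fps) = fps_const (real (k choose j))"
    by (simp only: fps_of_nat)
  show ?thesis
    unfolding m c e[symmetric] fps_const_mult[symmetric] by (simp only: ac_simps)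
qed

lemma EE_pow: "fps_nth (EE ^ k) n = (\<Sum>j\<le>k. (-1)^j * real (k choose j) * (real k / 2 - real j)^n) / fact n"
proof -
  have "EE ^ k = (- fps_exp (-1/2) + fps_exp (1/2)) ^ k" by (simp add: EE_def)
  also have "\<dots> = (\<Sum>j\<le>k. of_nat (k choose j) * (- fps_exp (-1/2)) ^ j * fps_exp (1/2) ^ (k - j))"
    by (rule binomial_ring)
  also have "\<dots> = (\<Sum>j\<le>k. fps_const ((-1)^j * real (k choose j)) * fps_exp (real k / 2 - real j))"
    by (rule sum.cong[OF refl], rule EE_term) simp
  finally have "fps_nth (EE ^ k) n = (\<Sum>j\<le>k. ((-1)^j * real (k choose j)) * ((real k / 2 - real j)^n / of_nat (fact n)))"
    by (simp only: fps_sum_nth fps_mult_left_const_nth fps_exp_nth)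
  then show ?thesis
    by (simp only: sum_divide_distrib times_divide_eq_right of_nat_fact)
qed

lemma fub_eq: "central_fubini n x / fact n = (\<Sum>k\<le>n. x^k * fps_nth (EE^k) n)"
proof -
  have "central_fubini n x / fact n = (\<Sum>k\<le>n. fact k * central_T n k * x^k / fact n)"
    unfolding central_fubini_def sum_divide_distrib atLeast0AtMost ..
  also have "\<dots> = (\<Sum>k\<le>n. x^k * fps_nth (EE^k) n)"
  proof (rule sum.cong[OF refl])
    fix k assume "k \<in> {..n}"
    then have "\<not> k > n" by simp
    then show "fact k * central_T n k * x^k / fact n = x^k * fps_nth (EE^k) n"
      unfolding EE_pow central_T_def atLeast0AtMost by simp
  qed
  finally show ?thesis .
qed

definition GG :: "real \<Rightarrow> real fps" where "GG x = fps_const x * EE"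

lemma GG0: "fps_nth (GG x) 0 = 0" by (simp add: GG_def EE0)

lemma GG_pow: "fps_nth (GG x ^ k) n = x^k * fps_nth (EE^k) n"
  by (simp add: GG_def power_mult_distrib)

lemma GG_Suc: "fps_nth (GG x) (Suc i) = (-1)^i * R_coef x (i+1)"
proof -
  have "((-1::real)^i * (-1)^i) = 1" by (simp flip: power_add)
  then show ?thesis
    unfolding GG_def R_coef_def fps_mult_left_const_nth EE_nth
    by (simp add: field_simps)
qed

definition ff :: "real \<Rightarrow> nat \<Rightarrow> real" where "ff x n = (\<Sum>k\<le>n. fps_nth (GG x ^ k) n)"

definition PP :: "real \<Rightarrow> nat \<Rightarrow> real fps" where "PP x m = (\<Sum>k\<le>m. GG x ^ k)"

lemma PP_nth: "n \<le> N \<Longrightarrow> fps_nth (PP x N) n = ff x n"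
proof -
  assume nN: "n \<le> N"
  have "fps_nth (PP x N) n = (\<Sum>k\<le>N. fps_nth (GG x ^ k) n)"
    by (simp add: PP_def fps_sum_nth)
  also have "\<dots> = ff x n" unfolding ff_def
    by (rule sum.mono_neutral_right) (use nN startsby_zero_power_prefix[OF GG0] in auto)
  finally show ?thesis .
qed

lemma PP_Suc: "PP x (Suc m) = 1 + GG x * PP x m"
  unfolding PP_def sum.atMost_Suc_shift sum_distrib_left by (simp add: power_Suc)

lemma ff_Suc: "ff x (Suc m) = (\<Sum>i\<le>m. (-1)^i * R_coef x (i+1) * ff x (m - i))"
proof -
  have "ff x (Suc m) = fps_nth (PP x (Suc m)) (Suc m)" by (simp add: PP_nth)
  also have "\<dots> = (\<Sum>i=0..Suc m. fps_nth (GG x) i * fps_nth (PP x m) (Suc m - i))"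
    unfolding PP_Suc by (simp add: fps_mult_nth)
  also have "\<dots> = (\<Sum>i=0..m. fps_nth (GG x) (Suc i) * fps_nth (PP x m) (m - i))"
    by (simp only: sum.atLeast0_atMost_Suc_shift) (simp add: GG0)
  also have "\<dots> = (\<Sum>i\<le>m. (-1)^i * R_coef x (i+1) * ff x (m - i))"
    unfolding atLeast0AtMost by (rule sum.cong[OF refl]) (simp add: GG_Suc PP_nth)
  finally show ?thesis .
qed

lemma ff0: "ff x 0 = 1" by (simp add: ff_def)

lemma ff_det: "ff x n = det (hess_mat x n)"
proof (induction n rule: less_induct)
  case (less n)
  show ?case
  proof (cases n)
    case 0 then show ?thesis by (simp add: ff0 hess0)
  next
    case (Suc m)
    have "ff x n = (\<Sum>i\<le>m. (-1)^i * R_coef x (i+1) * ff x (m - i))" using Suc ff_Suc by simp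
    also have "\<dots> = (\<Sum>i\<le>m. (-1)^i * R_coef x (i+1) * det (hess_mat x (m - i)))"
      by (rule sum.cong[OF refl]) (simp add: less.IH Suc)
    also have "\<dots> = det (hess_mat x n)" using Suc hess_rec by simp
    finally show ?thesis .
  qed
qed

theorem theorem10:
  fixes n :: nat and x :: real
  assumes "n \<ge> 1"
  shows "central_fubini n x / fact n = det (hess_mat x n)"
proof -
  have "central_fubini n x / fact n = ff x n"
    unfolding fub_eq ff_def GG_pow ..
  then show ?thesis using ff_det by simp
qed

end
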